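(* Let $X$ be a space, let $Y$ be an extension of $X$ with compact remainder, let $\zeta Y$ be a compactification of $Y$, and let $\phi:\beta X\to\zeta Y$ be the continuous extension of the identity of $X$. Then $Y$ is pseudocompact (i.e. $Y\in\mathscr{U}(X)$) if and only if $\mathrm{cl}_{\beta X}(\beta X\setminus\upsilon X)\subseteq\phi^{-1}[Y\setminus X]$.
   Context: All spaces are completely regular Hausdorff. $\beta X$ is the Stone–Čech compactification and $\upsilon X\subseteq\beta X$ the Hewitt realcompactification of $X$. An extension of $X$ is a space containing $X$ as a dense subspace; its remainder is $Y\setminus X$. A space is pseudocompact if every continuous real-valued function on it is bounded. $\mathscr{U}(X)$ is the set of pseudocompact extensions of $X$ with compact remainder. *)

theory Defs
  imports "HOL-Analysis.Analysis"
begin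

definition tychonoff_space :: "'a topology \<Rightarrow> bool" where
  "tychonoff_space X \<longleftrightarrow> completely_regular_space X \<and> Hausdorff_space X"

definition is_extension :: "'a topology \<Rightarrow> 'a topology \<Rightarrow> bool" where
  "is_extension X Y \<longleftrightarrow> topspace X \<subseteq> topspace Y \<and> X = subtopology Y (topspace X)
     \<and> Y closure_of (topspace X) = topspace Y"

definition is_compactification :: "'a topology \<Rightarrow> 'a topology \<Rightarrow> bool" where
  "is_compactification Y Z \<longleftrightarrow> is_extension Y Z \<and> compact_space Z \<and> Hausdorff_space Z"

definition is_stone_cech :: "'a topology \<Rightarrow> 'a topology \<Rightarrow> bool" where
  "is_stone_cech X B \<longleftrightarrow> is_compactification X B \<and>
     (\<forall>f. continuous_map X euclideanreal f \<and> bounded (f ` topspace X) \<longrightarrow>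
        (\<exists>g. continuous_map B euclideanreal g \<and> (\<forall>x\<in>topspace X. g x = f x)))"

text \<open>Hewitt realcompactification inside B = beta X: the largest subspace of B containing X
  to which every continuous real function on X extends continuously; pointwise,
  the points p of B such that every continuous real function on X extends continuously
  to the subspace X \<union> {p} of B.\<close>
definition hewitt :: "'a topology \<Rightarrow> 'a topology \<Rightarrow> 'a set" where
  "hewitt X B = {p \<in> topspace B. \<forall>f. continuous_map X euclideanreal f \<longrightarrow>
     (\<exists>g. continuous_map (subtopology B (insert p (topspace X))) euclideanreal g
          \<and> (\<forall>x\<in>topspace X. g x = f x))}"

definition pseudocompact :: "'a topology \<Rightarrow> bool" where
  "pseudocompact Y \<longleftrightarrow> (\<forall>f. continuous_map Y euclideanreal f \<longrightarrow> bounded (f ` topspace Y))"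

end

theory Submission imports Defs begin

lemma not_hewitt_unbounded:
  fixes X BX :: "'a topology"
  assumes XB: "topspace X \<subseteq> topspace BX" "X = subtopology BX (topspace X)"
    and H: "Hausdorff_space BX"
    and SC: "\<forall>f. continuous_map X euclideanreal f \<and> bounded (f ` topspace X) \<longrightarrow>
        (\<exists>g. continuous_map BX euclideanreal g \<and> (\<forall>x\<in>topspace X. g x = f x))"
    and q: "q \<in> topspace BX" "q \<notin> hewitt X BX"
  shows "\<exists>f. continuous_map X euclideanreal f \<and>
     (\<forall>U N. openin BX U \<longrightarrow> q \<in> U \<longrightarrow> (\<exists>x\<in>topspace X \<inter> U. N < \<bar>f x\<bar>))"
proof -
  obtain f where fc: "continuous_map X euclideanreal f" and
    nf: "\<And>g. continuous_map (subtopology BX (insert q (topspace X))) euclideanreal g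
          \<Longrightarrow> \<not> (\<forall>x\<in>topspace X. g x = f x)"
    using q unfolding hewitt_def by blast
  show ?thesis
  proof (rule exI[of _ f], intro conjI fc allI impI, rule ccontr)
    fix U N assume U: "openin BX U" "q \<in> U" and nex: "\<not> (\<exists>x\<in>topspace X \<inter> U. N < \<bar>f x\<bar>)"
    hence fb: "\<And>x. x \<in> topspace X \<Longrightarrow> x \<in> U \<Longrightarrow> \<bar>f x\<bar> \<le> N" by force
    show False
    proof (cases "q \<in> topspace X")
      case True
      hence "insert q (topspace X) = topspace X" by blast
      hence "continuous_map (subtopology BX (insert q (topspace X))) euclideanreal f"
        using fc XB by simp
      thus False using nf by blast
    next
      case False
      define f' where "f' x = max (-N) (min N (f x))" for x
      have f'c: "continuous_map X euclideanreal f'"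
        unfolding f'_def by (intro continuous_intros fc)
      have "bounded (f' ` topspace X)"
        unfolding bounded_iff f'_def by (intro exI[of _ "\<bar>N\<bar>"]) auto
      then obtain g' where g'c: "continuous_map BX euclideanreal g'"
        and g'e: "\<forall>x\<in>topspace X. g' x = f' x" using SC f'c by blast
      define S where "S = subtopology BX (insert q (topspace X))"
      have tS: "topspace S = insert q (topspace X)" using XB q by (auto simp: S_def)
      define T :: "bool \<Rightarrow> 'a set" where "T b = (if b then topspace X else insert q (topspace X) \<inter> U)" for b
      define F :: "bool \<Rightarrow> 'a \<Rightarrow> real" where "F b = (if b then f else g')" for b
      define G where "G y = (if y \<in> topspace X then f y else g' y)" for y
      have "continuous_map S euclideanreal G"
      proof (rule pasting_lemma[where I=UNIV and T=T and f=F])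
        fix i :: bool
        show "openin S (T i)"
        proof (cases i)
          case True
          have "Hausdorff_space S" using H by (simp add: S_def Hausdorff_space_subtopology)
          hence "closedin S {q}" using tS by (intro closedin_Hausdorff_singleton) auto
          hence "openin S (topspace S - {q})" by blast
          moreover have "topspace S - {q} = topspace X" using tS False by auto
          ultimately show ?thesis using True by (simp add: T_def)
        next
          case f: False
          show ?thesis using openin_subtopology_Int2[OF U(1), of "insert q (topspace X)"]
            by (simp add: S_def T_def f)
        qed
        show "continuous_map (subtopology S (T i)) euclideanreal (F i)"
        proof (cases i)
          case True
          have "subtopology S (T i) = X" using True XB
            by (simp add: S_def T_def subtopology_subtopology Int_absorb1 subset_insertI)
          thus ?thesis using True fc by (simp add: F_def)
        next
          case f: False
          show ?thesis unfolding F_def using f g'c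
            by (simp add: S_def continuous_map_from_subtopology)
        qed
      next
        fix i j x assume "x \<in> topspace S \<inter> T i \<inter> T j"
        moreover have "x \<in> topspace X \<Longrightarrow> x \<in> U \<Longrightarrow> g' x = f x"
          using g'e fb[of x] by (auto simp: f'_def)
        ultimately have "i = j \<or> (x \<in> topspace X \<and> x \<in> U)" "x \<in> topspace X \<Longrightarrow> x \<in> U \<Longrightarrow> g' x = f x"
          by (auto simp: T_def split: if_splits)
        thus "F i x = F j x" by (cases i; cases j) (auto simp: F_def)
      next
        fix x assume "x \<in> topspace S"
        hence "x \<in> topspace X \<or> x = q" using tS by auto
        thus "\<exists>j. j \<in> UNIV \<and> x \<in> T j \<and> G x = F j x"
        proof
          assume "x \<in> topspace X" thus ?thesis by (intro exI[of _ True]) (auto simp: T_def F_def G_def)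
        next
          assume "x = q" thus ?thesis using U False
            by (intro exI[of _ False]) (auto simp: T_def F_def G_def)
        qed
      qed
      moreover have "\<forall>x\<in>topspace X. G x = f x" by (simp add: G_def)
      ultimately show False using nf S_def by blast
    qed
  qed
qed


lemma top_eq_openin: "Y = Z \<Longrightarrow> openin Z S \<Longrightarrow> openin Y S" by simp
lemma top_eq_compactin: "Y = Z \<Longrightarrow> compactin Y S \<Longrightarrow> compactin Z S" by simp
lemma top_eq_cm: "Y = Z \<Longrightarrow> continuous_map Z E f \<Longrightarrow> continuous_map Y E f" by simp
lemma top_eq_sub: "Y = Z \<Longrightarrow> subtopology Y S = subtopology Z S" by simp

theorem lemma2p3:
  fixes X Y ZY BX :: "'a topology" and \<phi> :: "'a \<Rightarrow> 'a"
  assumes "tychonoff_space X" and "tychonoff_space Y"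
    and "is_extension X Y"
    and "compactin Y (topspace Y - topspace X)"
    and "is_compactification Y ZY"
    and "is_stone_cech X BX"
    and "continuous_map BX ZY \<phi>"
    and "\<forall>x\<in>topspace X. \<phi> x = x"
  shows "pseudocompact Y \<longleftrightarrow>
    BX closure_of (topspace BX - hewitt X BX)
      \<subseteq> {p \<in> topspace BX. \<phi> p \<in> topspace Y - topspace X}"
proof -
  note phic = assms(7) and phiid = assms(8)
  have SCd0: "is_compactification X BX" using assms(6) unfolding is_stone_cech_def by (elim conjE) assumption
  have SCd1: "\<forall>f. continuous_map X euclideanreal f \<and> bounded (f ` topspace X) \<longrightarrow>
        (\<exists>g. continuous_map BX euclideanreal g \<and> (\<forall>x\<in>topspace X. g x = f x))"
    using assms(6) unfolding is_stone_cech_def by (elim conjE) assumption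
  note SCd = SCd0 SCd1
  have cx0: "is_extension X BX" using SCd(1) unfolding is_compactification_def by (elim conjE) assumption
  have cx1: "compact_space BX" using SCd(1) unfolding is_compactification_def by (elim conjE) assumption
  have cx2: "Hausdorff_space BX" using SCd(1) unfolding is_compactification_def by (elim conjE) assumption
  have xb0: "topspace X \<subseteq> topspace BX" using cx0 unfolding is_extension_def by (elim conjE) assumption
  have xb1: "X = subtopology BX (topspace X)" using cx0 unfolding is_extension_def by (elim conjE) assumption
  have xb2: "BX closure_of topspace X = topspace BX" using cx0 unfolding is_extension_def by (elim conjE) assumption
  note XB = xb0 xb1 xb2 cx1 cx2
  note SC = SCd(2)
  have xy0: "topspace X \<subseteq> topspace Y" using assms(3) unfolding is_extension_def by (elim conjE) assumption
  have xy1: "X = subtopology Y (topspace X)" using assms(3) unfolding is_extension_def by (elim conjE) assumption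
  have xy2: "Y closure_of topspace X = topspace Y" using assms(3) unfolding is_extension_def by (elim conjE) assumption
  note XY = xy0 xy1 xy2
  have cy0: "is_extension Y ZY" using assms(5) unfolding is_compactification_def by (elim conjE) assumption
  have cy1: "compact_space ZY" using assms(5) unfolding is_compactification_def by (elim conjE) assumption
  have cy2: "Hausdorff_space ZY" using assms(5) unfolding is_compactification_def by (elim conjE) assumption
  have yz0: "topspace Y \<subseteq> topspace ZY" using cy0 unfolding is_extension_def by (elim conjE) assumption
  have yz1: "Y = subtopology ZY (topspace Y)" using cy0 unfolding is_extension_def by (elim conjE) assumption
  note YZ = yz0 yz1 cy1 cy2
  show ?thesis
  proof
    assume PC: "pseudocompact Y"
    define K where "K = topspace Y - topspace X"
    have "compactin (subtopology ZY (topspace Y)) K" using top_eq_compactin[OF YZ(2) assms(4)] K_def by simp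
    hence "compactin ZY K" by (simp add: compactin_subtopology)
    hence Kc: "closedin ZY K" using YZ(4) compactin_imp_closedin by blast
    have nZ: "normal_space ZY" using YZ(3,4) compact_Hausdorff_or_regular_imp_normal_space by blast
    show "BX closure_of (topspace BX - hewitt X BX)
      \<subseteq> {p \<in> topspace BX. \<phi> p \<in> topspace Y - topspace X}"
    proof
      fix p assume p: "p \<in> BX closure_of (topspace BX - hewitt X BX)"
      hence pB: "p \<in> topspace BX" using in_closure_of by fast
      have "\<phi> p \<in> K"
      proof (rule ccontr)
        assume nK: "\<phi> p \<notin> K"
        have pZ: "\<phi> p \<in> topspace ZY" using continuous_map_image_subset_topspace[OF phic] pB by blast
        have op: "openin ZY (topspace ZY - {\<phi> p})"
          using openin_diff[OF openin_topspace closedin_Hausdorff_singleton[OF YZ(4) pZ]] .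
        have sK: "K \<subseteq> topspace ZY - {\<phi> p}" using closedin_subset[OF Kc] nK by blast
        obtain V where V: "openin ZY V" "K \<subseteq> V" "ZY closure_of V \<subseteq> topspace ZY - {\<phi> p}"
          using normal_space_alt[THEN iffD1, OF nZ, rule_format, OF conjI[OF Kc conjI[OF op sK]]] by blast
        obtain V1 where V1: "openin ZY V1" "K \<subseteq> V1" "ZY closure_of V1 \<subseteq> V"
          using normal_space_alt[THEN iffD1, OF nZ, rule_format, OF conjI[OF Kc conjI[OF V(1,2)]]] by blast
        have oV: "openin ZY (topspace ZY - ZY closure_of V)" by (rule openin_diff[OF openin_topspace closedin_closure_of])
        have cp: "closedin ZY {\<phi> p}" using closedin_Hausdorff_singleton[OF YZ(4) pZ] .
        have sV: "{\<phi> p} \<subseteq> topspace ZY - ZY closure_of V" using V(3) pZ by blast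
        obtain W0 where W0: "openin ZY W0" "{\<phi> p} \<subseteq> W0" "ZY closure_of W0 \<subseteq> topspace ZY - ZY closure_of V"
          using normal_space_alt[THEN iffD1, OF nZ, rule_format, OF conjI[OF cp conjI[OF oV sV]]] by blast
        obtain W where W: "openin ZY W" "\<phi> p \<in> W" "ZY closure_of W \<subseteq> topspace ZY - ZY closure_of V"
          using W0 by blast
        obtain g where gc: "continuous_map ZY euclideanreal g" and g1: "g ` (ZY closure_of W) \<subseteq> {1}"
          and g0: "g ` (ZY closure_of V) \<subseteq> {0}"
          using Urysohn_lemma_alt[OF nZ, of "ZY closure_of W" "ZY closure_of V" 1 0] W(3)
          by (auto simp: disjnt_def)
        have VZ: "V \<subseteq> topspace ZY" "W \<subseteq> topspace ZY" using openin_subset[OF V(1)] openin_subset[OF W(1)] by auto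
        have gV: "\<And>y. y \<in> V \<Longrightarrow> g y = 0" using g0 closure_of_subset[OF VZ(1)] by blast
        have gW: "\<And>y. y \<in> W \<Longrightarrow> g y = 1" using g1 closure_of_subset[OF VZ(2)] by blast
        define P where "P = {b \<in> topspace BX. \<phi> b \<in> W}"
        have Po: "openin BX P" unfolding P_def using openin_continuous_map_preimage[OF phic W(1)] .
        have "p \<in> P" using pB W(2) by (simp add: P_def)
        then obtain q where q: "q \<in> topspace BX - hewitt X BX" "q \<in> P"
          using p Po unfolding in_closure_of by blast
        obtain f where fc: "continuous_map X euclideanreal f" and
          fu: "\<And>U N. openin BX U \<Longrightarrow> q \<in> U \<Longrightarrow> \<exists>x\<in>topspace X \<inter> U. N < \<bar>f x\<bar>"
          using not_hewitt_unbounded[OF XB(1,2) XB(5) SC, of q] q by blast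
        define H where "H y = (if y \<in> topspace X then g y * f y else 0)" for y
        define T :: "bool \<Rightarrow> 'a set" where "T b = (if b then topspace Y \<inter> V else topspace Y - ZY closure_of V1)" for b
        define F :: "bool \<Rightarrow> 'a \<Rightarrow> real" where "F b = (if b then (\<lambda>y. 0) else (\<lambda>y. g y * f y))" for b
        have V1Z: "V1 \<subseteq> topspace ZY" using openin_subset[OF V1(1)] by auto
        have O2X: "topspace Y - ZY closure_of V1 \<subseteq> topspace X"
          using V1(2) closure_of_subset[OF V1Z] K_def by blast
        have Hc: "continuous_map Y euclideanreal H"
        proof (rule pasting_lemma[where I=UNIV and T=T and f=F])
          fix i :: bool
          show "openin Y (T i)"
          proof (cases i)
            case True thus ?thesis using top_eq_openin[OF YZ(2) openin_subtopology_Int2[OF V(1), of "topspace Y"]]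
              by (simp add: T_def)
          next
            case False
            have "openin ZY (topspace ZY - ZY closure_of V1)" by (rule openin_diff[OF openin_topspace closedin_closure_of])
            from openin_subtopology_Int2[OF this, of "topspace Y"]
            have "openin Y (topspace Y \<inter> (topspace ZY - ZY closure_of V1))" by (rule top_eq_openin[OF YZ(2)])
            moreover have "topspace Y \<inter> (topspace ZY - ZY closure_of V1) = topspace Y - ZY closure_of V1"
              using YZ(1) by blast
            ultimately show ?thesis using False by (simp add: T_def)
          qed
          show "continuous_map (subtopology Y (T i)) euclideanreal (F i)"
          proof (cases i)
            case True thus ?thesis by (simp add: F_def)
          next
            case False
            let ?O = "topspace Y - ZY closure_of V1"
            have "subtopology X ?O = subtopology (subtopology Y (topspace X)) ?O" by (rule top_eq_sub[OF XY(2)])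
            also have "\<dots> = subtopology Y ?O" using O2X by (simp add: subtopology_subtopology Int_absorb1)
            finally have e1: "subtopology X ?O = subtopology Y ?O" .
            have "subtopology Y ?O = subtopology (subtopology ZY (topspace Y)) ?O" by (rule top_eq_sub[OF YZ(2)])
            also have "\<dots> = subtopology ZY ?O" by (simp add: subtopology_subtopology Int_absorb1)
            finally have e2: "subtopology Y ?O = subtopology ZY ?O" .
            have "continuous_map (subtopology Y ?O) euclideanreal f"
              using continuous_map_from_subtopology[OF fc, of ?O] unfolding e1 .
            moreover have "continuous_map (subtopology Y ?O) euclideanreal g"
              using continuous_map_from_subtopology[OF gc, of ?O] unfolding e2 .
            ultimately show ?thesis using False
              by (simp add: F_def T_def continuous_map_real_mult)
          qed
        next
          fix i j x assume x: "x \<in> topspace Y \<inter> T i \<inter> T j"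
          show "F i x = F j x"
          proof (cases "i = j")
            case False
            hence "x \<in> V" using x by (cases i; cases j) (auto simp: T_def)
            thus ?thesis using gV by (cases i; cases j) (auto simp: F_def)
          qed simp
        next
          fix x assume xY: "x \<in> topspace Y"
          show "\<exists>j. j \<in> UNIV \<and> x \<in> T j \<and> H x = F j x"
          proof (cases "x \<in> V")
            case True thus ?thesis using xY gV by (intro exI[of _ True]) (auto simp: T_def F_def H_def)
          next
            case False
            hence "x \<notin> ZY closure_of V1" using V1(3) by blast
            thus ?thesis using xY O2X by (intro exI[of _ False]) (auto simp: T_def F_def H_def)
          qed
        qed
        have "bounded (H ` topspace Y)" using PC Hc unfolding pseudocompact_def by blast
        then obtain B where B: "\<forall>y\<in>topspace Y. \<bar>H y\<bar> \<le> B" unfolding bounded_iff by auto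
        obtain x where x: "x \<in> topspace X \<inter> P" "B < \<bar>f x\<bar>" using fu[OF Po q(2)] by blast
        have "\<phi> x = x" using phiid x by blast
        hence "x \<in> W" using x P_def by auto
        hence "H x = f x" using gW x by (simp add: H_def)
        moreover have "x \<in> topspace Y" using x XY(1) by blast
        ultimately show False using B x by force
      qed
      thus "p \<in> {p \<in> topspace BX. \<phi> p \<in> topspace Y - topspace X}" using pB K_def by simp
    qed
  next
    assume R: "BX closure_of (topspace BX - hewitt X BX)
      \<subseteq> {p \<in> topspace BX. \<phi> p \<in> topspace Y - topspace X}"
    show "pseudocompact Y"
    proof (rule ccontr)
      assume "\<not> pseudocompact Y"
      then obtain h where hc: "continuous_map Y euclideanreal h" and hu: "\<not> bounded (h ` topspace Y)"
        unfolding pseudocompact_def by blast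
      define A where "A n = {x \<in> topspace X. real n \<le> \<bar>h x\<bar>}" for n :: nat
      have Ane: "A n \<noteq> {}" for n
      proof -
        have "\<not> (\<forall>y\<in>topspace Y. \<bar>h y\<bar> \<le> real n)"
        proof
          assume H: "\<forall>y\<in>topspace Y. \<bar>h y\<bar> \<le> real n"
          have "bounded (h ` topspace Y)" unfolding bounded_iff
            by (rule exI[of _ "real n"]) (use H in auto)
          with hu show False by contradiction
        qed
        then obtain y where y: "y \<in> topspace Y" "real n < \<bar>h y\<bar>" by (auto simp: not_le)
        have oe: "openin euclideanreal {real n<..}" unfolding open_openin[symmetric] by (rule open_greaterThan)
        define Oy where "Oy = {y \<in> topspace Y. \<bar>h y\<bar> \<in> {real n<..}}"
        have O: "openin Y Oy" unfolding Oy_def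
          by (rule openin_continuous_map_preimage[OF continuous_map_real_abs[OF hc] oe])
        have yc: "y \<in> Y closure_of topspace X" using y(1) by (subst XY(3))
        have yO: "y \<in> Oy" using y by (simp add: Oy_def)
        have "\<forall>T. y \<in> T \<and> openin Y T \<longrightarrow> (\<exists>y'. y' \<in> topspace X \<and> y' \<in> T)"
          using yc unfolding in_closure_of by (elim conjE)
        then obtain x where "x \<in> topspace X" "x \<in> Oy" using O yO by blast
        hence "x \<in> topspace X" "x \<in> {y \<in> topspace Y. \<bar>h y\<bar> \<in> {real n<..}}" unfolding Oy_def by auto
        hence "x \<in> A n" unfolding A_def by auto
        thus ?thesis by blast
      qed
      define C where "C n = BX closure_of A n" for n
      have AB: "A n \<subseteq> topspace BX" for n using XB(1) unfolding A_def by blast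
      have "(\<Inter>n. C n) \<noteq> {}"
      proof (rule compact_space_imp_nest[OF XB(4)])
        show "closedin BX (C n)" for n unfolding C_def by simp
        show "C n \<noteq> {}" for n using closure_of_subset[OF AB[of n]] Ane[of n] unfolding C_def by blast
        show "decseq C"
        proof (rule decseq_SucI)
          fix n
          have "A (Suc n) \<subseteq> A n" unfolding A_def by auto
          thus "C (Suc n) \<subseteq> C n" unfolding C_def by (rule closure_of_mono)
        qed
      qed
      then obtain p where pC: "\<And>n. p \<in> C n" by blast
      have pB: "p \<in> topspace BX" using pC[of 0] closure_of_subset_topspace[of BX "A 0"] unfolding C_def by blast
      have near: "\<exists>x\<in>topspace X \<inter> U. r < \<bar>h x\<bar>" if U: "openin BX U" "p \<in> U" for U r
      proof -
        define n where "n = nat \<lceil>r\<rceil> + 1"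
        have "r < real n" unfolding n_def by linarith
        obtain x where "x \<in> A n" "x \<in> U" using pC[of n] U unfolding C_def in_closure_of by blast
        hence "x \<in> topspace X" "real n \<le> \<bar>h x\<bar>" "x \<in> U" unfolding A_def by auto
        thus ?thesis using \<open>r < real n\<close> by (intro bexI[of _ x]) auto
      qed
      have nh: "p \<notin> hewitt X BX"
      proof
        assume ph: "p \<in> hewitt X BX"
        have hX: "continuous_map X euclideanreal h"
          using top_eq_cm[OF XY(2) continuous_map_from_subtopology[OF hc]] .
        obtain g where gc: "continuous_map (subtopology BX (insert p (topspace X))) euclideanreal g"
          and ge: "\<forall>x\<in>topspace X. g x = h x"
          using ph hX unfolding hewitt_def by blast
        define I where "I = {g p - 1<..<g p + 1}"
        have oI: "openin euclideanreal I" unfolding I_def open_openin[symmetric] by (rule open_greaterThanLessThan)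
        define S where "S = insert p (topspace X)"
        define Q where "Q = {y \<in> topspace (subtopology BX S). g y \<in> I}"
        have "openin (subtopology BX S) Q" unfolding Q_def
          using openin_continuous_map_preimage[OF gc oI] unfolding S_def .
        then obtain T where T: "openin BX T" "Q = T \<inter> S"
          unfolding openin_subtopology by blast
        have tS: "topspace (subtopology BX S) = topspace BX \<inter> S" by (rule topspace_subtopology)
        have "p \<in> Q" unfolding Q_def tS S_def I_def using pB by simp
        hence "p \<in> T" using T(2) by blast
        then obtain x where x: "x \<in> topspace X \<inter> T" "\<bar>g p\<bar> + 1 < \<bar>h x\<bar>" using near[OF T(1)] by blast
        hence "x \<in> T \<inter> S" unfolding S_def by blast
        hence "x \<in> Q" using T(2) by simp
        hence "g x \<in> I" unfolding Q_def by simp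
        moreover have "g x = h x" using ge x by blast
        ultimately show False using x(2) unfolding I_def by auto
      qed
      have "p \<in> topspace BX - hewitt X BX" using pB nh by blast
      hence "p \<in> BX closure_of (topspace BX - hewitt X BX)"
        using closure_of_subset[of "topspace BX - hewitt X BX" BX] by blast
      hence "p \<in> {p \<in> topspace BX. \<phi> p \<in> topspace Y - topspace X}" using R by blast
      hence k: "\<phi> p \<in> topspace Y" by simp
      define k where "k = \<phi> p"
      define I where "I = {h k - 1<..<h k + 1}"
      have oI: "openin euclideanreal I" unfolding I_def open_openin[symmetric] by (rule open_greaterThanLessThan)
      define Q where "Q = {y \<in> topspace Y. h y \<in> I}"
      have "openin Y Q" unfolding Q_def by (rule openin_continuous_map_preimage[OF hc oI])
      hence "openin (subtopology ZY (topspace Y)) Q"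
        by (rule top_eq_openin[OF YZ(2)[symmetric]])
      then obtain T where T: "openin ZY T" "Q = T \<inter> topspace Y"
        unfolding openin_subtopology by blast
      have "k \<in> Q" unfolding Q_def I_def using k k_def by simp
      hence "k \<in> T" using T(2) by blast
      define P where "P = {b \<in> topspace BX. \<phi> b \<in> T}"
      have Po: "openin BX P" unfolding P_def using openin_continuous_map_preimage[OF phic T(1)] .
      have "p \<in> P" using pB \<open>k \<in> T\<close> unfolding k_def P_def by simp
      then obtain x where x: "x \<in> topspace X \<inter> P" "\<bar>h k\<bar> + 1 < \<bar>h x\<bar>" using near[OF Po] by blast
      have "\<phi> x = x" using phiid x by blast
      hence "x \<in> T" using x unfolding P_def by auto
      moreover have "x \<in> topspace Y" using x XY(1) by blast
      ultimately have "x \<in> Q" using T(2) by blast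
      hence "h x \<in> I" unfolding Q_def by simp
      thus False using x(2) unfolding I_def by auto
    qed
  qed
qed

end
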